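(* Let $R$ be a commutative ring and let $a(x),b(x)\in R[[x]]$ be formal power series. For every integer $k\ge0$ with binary expansion $k=\sum_{j\ge0}d_j2^j$ ($d_j\in\{0,1\}$, almost all zero), set $$\dot f_k(x)=\prod_{j\ge0,\ d_j=1}\bigl(1-x^{2^j}\bigr),\qquad f_k(x)=\prod_{j\ge0,\ d_j=0}\bigl(1+x^{2^j}\bigr)\in R[[x]],\qquad \sigma_k=(-1)^{\sum_j d_j}.$$ Then $$a(x)\,b(x)=\sum_{k=0}^{\infty}f_k(x)\cdot\Bigl(\bigl(\sigma_k\,f_k(x)\,x^k\bigr)\odot\bigl(\dot f_k(x)\,a(x)\bigr)\odot\bigl(\dot f_k(x)\,b(x)\bigr)\Bigr).$$
   Context: For formal power series $P=\sum_i p_ix^i$ and $Q=\sum_i q_ix^i$, the termwise product is $P\odot Q=\sum_i p_iq_ix^i$. The infinite product defining $f_k$ converges in $R[[x]]$ (for $k=0$ it equals $\frac{1}{1-x}=\sum_{i\ge0}x^i$). In the formula, ordinary products are computed first, then the termwise products, and the result is multiplied (ordinary product) by $f_k(x)$; the infinite sum converges formally since the $k$-th summand has order at least $k$. *)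

theory Defs
  imports "HOL-Computational_Algebra.Formal_Power_Series"
begin

definition termwise_prod :: "'a::times fps \<Rightarrow> 'a fps \<Rightarrow> 'a fps" (infixl "\<odot>" 70) where
  "termwise_prod P Q = Abs_fps (\<lambda>i. fps_nth P i * fps_nth Q i)"

definition fdot :: "nat \<Rightarrow> 'a::comm_ring_1 fps" where
  "fdot k = (\<Prod>j\<in>{j. bit k j}. (1 - fps_X ^ (2 ^ j)))"

text \<open>Infinite product over the digits equal to 0, as the formal limit (in the
  X-adic metric of the fps ring) of its partial products.\<close>
definition fk :: "nat \<Rightarrow> 'a::comm_ring_1 fps" where
  "fk k = lim (\<lambda>N. \<Prod>j\<in>{j. j < N \<and> \<not> bit k j}. (1 + fps_X ^ (2 ^ j)))"

definition sigma :: "nat \<Rightarrow> 'a::comm_ring_1" where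
  "sigma k = (-1) ^ card {j. bit k j}"

end

theory Submission
  imports Defs
begin
unbundle fps_syntax

definition sq :: "'a::comm_ring_1 fps \<Rightarrow> 'a fps" where
  "sq P = Abs_fps (\<lambda>n. if even n then P $ (n div 2) else 0)"
definition ev :: "'a::comm_ring_1 fps \<Rightarrow> 'a fps" where
  "ev P = Abs_fps (\<lambda>n. P $ (2*n))"
definition od :: "'a::comm_ring_1 fps \<Rightarrow> 'a fps" where
  "od P = Abs_fps (\<lambda>n. P $ (2*n+1))"
definition lz :: "nat \<Rightarrow> 'a::comm_ring_1 fps \<Rightarrow> bool" where
  "lz K D = (\<forall>i<K. D $ i = 0)"

lemma sq_add: "sq (A + B) = sq A + sq B"
  by (rule fps_ext) (simp add: sq_def)
lemma sq_diff: "sq (A - B) = sq A - sq B"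
  by (rule fps_ext) (simp add: sq_def)
lemma sq_uminus: "sq (- A) = - sq A"
  by (rule fps_ext) (simp add: sq_def)
lemma sq_0: "sq 0 = 0"
  by (rule fps_ext) (simp add: sq_def)
lemma sq_1: "sq 1 = 1"
  by (rule fps_ext) (auto simp add: sq_def)
lemma sq_const: "sq (fps_const c) = fps_const c"
  by (rule fps_ext) (auto simp add: sq_def)
lemma sq_X: "sq fps_X = (fps_X ^ 2 :: 'a::comm_ring_1 fps)"
  by (rule fps_ext) (auto simp add: sq_def)

lemma sq_mult: "sq (A * B) = sq A * sq (B::'a::comm_ring_1 fps)"
proof (rule fps_ext)
  fix n
  show "sq (A*B) $ n = (sq A * sq B) $ n"
  proof (cases "even n")
    case True
    then obtain m where n: "n = 2*m" by blast
    let ?h = "\<lambda>i. sq A $ i * sq B $ (n - i)"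
    have "(sq A * sq B) $ n = (\<Sum>i\<in>{0..n}. ?h i)" by (simp add: fps_mult_nth)
    also have "\<dots> = (\<Sum>i\<in>(\<lambda>j. 2*j)`{0..m}. ?h i)"
      by (rule sum.mono_neutral_right) (auto simp: n sq_def)
    also have "\<dots> = (\<Sum>j\<in>{0..m}. ?h (2*j))"
      by (subst sum.reindex) (auto simp: inj_on_def)
    also have "\<dots> = (\<Sum>j\<in>{0..m}. A$j * B$(m-j))"
    proof (rule sum.cong)
      fix j assume "j \<in> {0..m}"
      then have "n - 2*j = 2*(m-j)" by (simp add: n)
      then show "?h (2*j) = A$j * B$(m-j)" by (simp add: sq_def)
    qed simp
    also have "\<dots> = sq (A*B) $ n" by (simp add: n sq_def fps_mult_nth)
    finally show ?thesis ..
  next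
    case False
    have "(sq A * sq B) $ n = 0"
      unfolding fps_mult_nth
    proof (rule sum.neutral, safe)
      fix i assume "i \<in> {0..n}"
      then have "even i \<Longrightarrow> odd (n - i)" using False by auto
      then show "sq A $ i * sq B $ (n - i) = 0" by (auto simp: sq_def)
    qed
    then show ?thesis using False by (simp add: sq_def)
  qed
qed

lemma sq_power: "sq (A ^ k) = sq A ^ k"
  by (induction k) (simp_all add: sq_1 sq_mult)

lemma sq_Xpow: "sq (fps_X ^ k) = (fps_X ^ (2*k) :: 'a::comm_ring_1 fps)"
  by (simp add: sq_power sq_X power_mult)

lemma decomp: "P = sq (ev P) + fps_X * sq (od P)"
proof (rule fps_ext)
  fix n
  show "P $ n = (sq (ev P) + fps_X * sq (od P)) $ n"
  proof (cases "even n")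
    case True then show ?thesis by (auto simp: sq_def ev_def od_def)
  next
    case False
    then obtain m where n: "n = 2*m+1" using oddE by blast
    then show ?thesis by (auto simp: sq_def ev_def od_def)
  qed
qed

lemma had: "(sq A + fps_X * sq B) \<odot> (sq C + fps_X * sq D) = sq (A \<odot> C) + fps_X * sq (B \<odot> D)"
proof (rule fps_ext)
  fix n
  show "((sq A + fps_X * sq B) \<odot> (sq C + fps_X * sq D)) $ n = (sq (A \<odot> C) + fps_X * sq (B \<odot> D)) $ n"
  proof (cases "even n")
    case True then show ?thesis by (auto simp: sq_def termwise_prod_def)
  next
    case False
    then obtain m where n: "n = 2*m+1" using oddE by blast
    then show ?thesis by (auto simp: sq_def termwise_prod_def)
  qed
qed

lemma had0: "0 \<odot> (P::'a::comm_ring_1 fps) = 0"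
  by (rule fps_ext) (simp add: termwise_prod_def)
lemma had_uminus: "(- (P::'a::comm_ring_1 fps)) \<odot> Q = - (P \<odot> Q)"
  by (rule fps_ext) (simp add: termwise_prod_def)

lemma lz_add: "lz K A \<Longrightarrow> lz K B \<Longrightarrow> lz K (A + B)" by (simp add: lz_def)
lemma lz_diff: "lz K A \<Longrightarrow> lz K B \<Longrightarrow> lz K (A - B)" by (simp add: lz_def)
lemma lz_mono: "lz K A \<Longrightarrow> K' \<le> K \<Longrightarrow> lz K' A" by (simp add: lz_def)
lemma lz_mult: "lz K B \<Longrightarrow> lz K (C * B)"
  by (auto simp add: lz_def fps_mult_nth intro!: sum.neutral)
lemma lz_had: "lz K P \<Longrightarrow> lz K (P \<odot> Q)"
  by (simp add: lz_def termwise_prod_def)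
lemma lz_sq: "lz K D \<Longrightarrow> lz (2*K) (sq D)"
  by (auto simp add: lz_def sq_def)
lemma lz_Xpow: "lz k (C * fps_X ^ k)"
  by (simp add: lz_def fps_X_power_mult_right_nth)
lemma lz_sum: "(\<And>k. k \<in> S \<Longrightarrow> lz K (f k)) \<Longrightarrow> lz K (sum f S)"
  by (simp add: lz_def fps_sum_nth)


lemma sq_prod: "sq (prod f S) = prod (\<lambda>j. sq (f j)) S"
  by (induction S rule: infinite_finite_induct) (simp_all add: sq_1 sq_mult)

lemma bit_fin: "finite {j. bit (m::nat) j}"
proof (rule finite_subset)
  show "{j. bit m j} \<subseteq> {..m}"
  proof
    fix j assume "j \<in> {j. bit m j}"
    then have "bit m j" by simp
    show "j \<in> {..m}"
    proof (rule ccontr)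
      assume "j \<notin> {..m}"
      then have "m < j" by simp
      also have "j < 2^j" by (rule less_exp)
      finally have "m div 2^j = 0" by simp
      with \<open>bit m j\<close> show False by (simp add: bit_nat_def)
    qed
  qed
qed simp

lemma bitset: "{j. bit (m::nat) j} = (if odd m then {0} else {}) \<union> Suc ` {j. bit (m div 2) j}"
proof (rule set_eqI)
  fix j show "j \<in> {j. bit m j} \<longleftrightarrow> j \<in> (if odd m then {0} else {}) \<union> Suc ` {j. bit (m div 2) j}"
    by (cases j) (auto simp: bit_0 bit_Suc)
qed

lemma nbitset: "{j. j < Suc N \<and> \<not> bit (m::nat) j} = (if even m then {0} else {}) \<union> Suc ` {j. j < N \<and> \<not> bit (m div 2) j}"
proof (rule set_eqI)
  fix j show "j \<in> {j. j < Suc N \<and> \<not> bit (m::nat) j} \<longleftrightarrow> j \<in> (if even m then {0} else {}) \<union> Suc ` {j. j < N \<and> \<not> bit (m div 2) j}"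
    by (cases j) (auto simp: bit_0 bit_Suc)
qed

lemma nbitset2: "{j. j < Suc N \<and> \<not> bit (m::nat) j} = {j. j < N \<and> \<not> bit m j} \<union> (if bit m N then {} else {N})"
proof (rule set_eqI)
  fix j show "j \<in> {j. j < Suc N \<and> \<not> bit (m::nat) j} \<longleftrightarrow> j \<in> {j. j < N \<and> \<not> bit m j} \<union> (if bit m N then {} else {N})"
    by (cases "j = N") (simp_all add: less_Suc_eq)
qed

lemma fdot_rec: "(fdot m :: 'a::comm_ring_1 fps) = (if odd m then 1 - fps_X else 1) * sq (fdot (m div 2))"
proof -
  let ?f = "\<lambda>j. (1 - fps_X ^ (2 ^ j) :: 'a fps)"
  have fin: "finite {j. bit (m div 2) j}" by (rule bit_fin)
  have "fdot m = prod ?f ((if odd m then {0} else {}) \<union> Suc ` {j. bit (m div 2) j})"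
    unfolding fdot_def by (subst bitset) simp
  also have "\<dots> = prod ?f (if odd m then {0} else {}) * prod ?f (Suc ` {j. bit (m div 2) j})"
    by (rule prod.union_disjoint) (auto simp: fin)
  also have "prod ?f (Suc ` {j. bit (m div 2) j}) = prod (\<lambda>j. ?f (Suc j)) {j. bit (m div 2) j}"
    by (subst prod.reindex) auto
  also have "\<dots> = prod (\<lambda>j. sq (?f j)) {j. bit (m div 2) j}"
    by (rule prod.cong) (simp_all add: sq_diff sq_1 sq_Xpow)
  also have "\<dots> = sq (fdot (m div 2))"
    by (simp add: sq_prod fdot_def)
  finally show ?thesis by simp
qed

lemma sigma_rec: "(sigma m :: 'a::comm_ring_1) = (if odd m then -1 else 1) * sigma (m div 2)"
proof -
  have fin: "finite {j. bit (m div 2) j}" by (rule bit_fin)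
  have "card {j. bit m j} = card (if odd m then {0} else {}::nat set) + card (Suc ` {j. bit (m div 2) j})"
    by (subst bitset, rule card_Un_disjoint) (auto simp: fin)
  also have "card (Suc ` {j. bit (m div 2) j}) = card {j. bit (m div 2) j}"
    by (rule card_image) simp
  finally show ?thesis by (simp add: sigma_def)
qed

definition PP :: "nat \<Rightarrow> nat \<Rightarrow> 'a::comm_ring_1 fps" where
  "PP m N = (\<Prod>j\<in>{j. j < N \<and> \<not> bit m j}. (1 + fps_X ^ (2 ^ j)))"

lemma PP_rec: "(PP m (Suc N) :: 'a::comm_ring_1 fps) = (if even m then 1 + fps_X else 1) * sq (PP (m div 2) N)"
proof -
  let ?f = "\<lambda>j. (1 + fps_X ^ (2 ^ j) :: 'a fps)"
  have fin: "finite {j. j < N \<and> \<not> bit (m div 2) j}" by simp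
  have "PP m (Suc N) = prod ?f ((if even m then {0} else {}) \<union> Suc ` {j. j < N \<and> \<not> bit (m div 2) j})"
    unfolding PP_def by (subst nbitset) simp
  also have "\<dots> = prod ?f (if even m then {0} else {}) * prod ?f (Suc ` {j. j < N \<and> \<not> bit (m div 2) j})"
    by (rule prod.union_disjoint) (auto simp: fin)
  also have "prod ?f (Suc ` {j. j < N \<and> \<not> bit (m div 2) j}) = prod (\<lambda>j. ?f (Suc j)) {j. j < N \<and> \<not> bit (m div 2) j}"
    by (subst prod.reindex) auto
  also have "\<dots> = prod (\<lambda>j. sq (?f j)) {j. j < N \<and> \<not> bit (m div 2) j}"
    by (rule prod.cong) (simp_all add: sq_add sq_1 sq_Xpow)
  also have "\<dots> = sq (PP (m div 2) N)"
    by (simp add: sq_prod PP_def)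
  finally show ?thesis by simp
qed

lemma PP_step: "(PP m (Suc N) :: 'a::comm_ring_1 fps) = PP m N * (if bit m N then 1 else 1 + fps_X ^ (2 ^ N))"
proof -
  let ?f = "\<lambda>j. (1 + fps_X ^ (2 ^ j) :: 'a fps)"
  have "PP m (Suc N) = prod ?f ({j. j < N \<and> \<not> bit m j} \<union> (if bit m N then {} else {N}))"
    unfolding PP_def by (subst nbitset2) simp
  also have "\<dots> = PP m N * prod ?f (if bit m N then {} else {N})"
    unfolding PP_def by (rule prod.union_disjoint) auto
  finally show ?thesis by simp
qed

lemma PP_stable: "i < 2 ^ N \<Longrightarrow> (PP m (Suc N) :: 'a::comm_ring_1 fps) $ i = PP m N $ i"
  by (simp add: PP_step distrib_left fps_X_power_mult_right_nth)

lemma PP_stable2: "i < N \<Longrightarrow> (PP m N :: 'a::comm_ring_1 fps) $ i = PP m (Suc i) $ i"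
proof (induction N)
  case 0 then show ?case by simp
next
  case (Suc N)
  show ?case
  proof (cases "i = N")
    case False
    then have "i < N" using Suc.prems by simp
    moreover have "N < 2 ^ N" by (rule less_exp)
    ultimately have "i < 2 ^ N" by linarith
    then have "(PP m (Suc N) :: 'a fps) $ i = PP m N $ i" by (rule PP_stable)
    then show ?thesis using Suc.IH \<open>i < N\<close> by simp
  qed simp
qed

lemma TL:
  fixes Y :: "nat \<Rightarrow> 'a::comm_ring_1 fps"
  assumes "\<And>L. \<exists>N0. \<forall>N\<ge>N0. lz L (Y N - F)"
  shows "Y \<longlonglongrightarrow> F"
proof (rule metric_LIMSEQ_I)
  fix r :: real assume "0 < r"
  obtain L where L: "(1/2::real)^L < r" using real_arch_pow_inv[of r "1/2"] \<open>0<r\<close> by auto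
  obtain N0 where N0: "\<forall>N\<ge>N0. lz L (Y N - F)" using assms by blast
  show "\<exists>no. \<forall>n\<ge>no. dist (Y n) F < r"
  proof (intro exI allI impI)
    fix n assume "N0 \<le> n"
    hence lzn: "lz L (Y n - F)" using N0 by auto
    show "dist (Y n) F < r"
    proof (cases "Y n = F")
      case True thus ?thesis using \<open>0<r\<close> by simp
    next
      case False
      hence "subdegree (Y n - F) \<ge> L" using lzn by (intro subdegree_geI) (auto simp: lz_def)
      hence "inverse (2 ^ subdegree (Y n - F) :: real) \<le> inverse (2^L)"
        by (intro le_imp_inverse_le power_increasing) auto
      moreover have "inverse (2^L::real) = (1/2)^L" by (simp add: power_one_over inverse_eq_divide)
      ultimately show ?thesis using False L by (simp add: dist_fps_def)
    qed
  qed
qed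

lemma fk_eq: "(fk m :: 'a::comm_ring_1 fps) = Abs_fps (\<lambda>i. PP m (Suc i) $ i)"
proof -
  have "(\<lambda>N. (PP m N :: 'a fps)) \<longlonglongrightarrow> Abs_fps (\<lambda>i. PP m (Suc i) $ i)"
  proof (rule TL)
    fix L show "\<exists>N0. \<forall>N\<ge>N0. lz L (PP m N - Abs_fps (\<lambda>i. PP m (Suc i) $ i) :: 'a fps)"
    proof (rule exI[of _ L], intro allI impI)
      fix N assume "L \<le> N"
      show "lz L (PP m N - Abs_fps (\<lambda>i. PP m (Suc i) $ i) :: 'a fps)"
        unfolding lz_def
      proof (intro allI impI)
        fix i assume "i < L"
        then have "(PP m N :: 'a fps) $ i = PP m (Suc i) $ i" using \<open>L \<le> N\<close> by (intro PP_stable2) simp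
        then show "(PP m N - Abs_fps (\<lambda>i. PP m (Suc i) $ i) :: 'a fps) $ i = 0" by simp
      qed
    qed
  qed
  then show ?thesis unfolding fk_def PP_def by (rule limI)
qed

lemma fk_nth: "i < N \<Longrightarrow> (fk m :: 'a::comm_ring_1 fps) $ i = PP m N $ i"
  unfolding fk_eq by (simp add: PP_stable2[symmetric])

lemma fk_rec: "(fk m :: 'a::comm_ring_1 fps) = (if even m then 1 + fps_X else 1) * sq (fk (m div 2))"
proof (rule fps_ext)
  fix i
  let ?c = "(if even m then 1 + fps_X else 1) :: 'a fps"
  have "lz (Suc i) (fk (m div 2) - PP (m div 2) (Suc i) :: 'a fps)"
    by (simp add: lz_def fk_nth)
  then have "lz (2 * Suc i) (?c * sq (fk (m div 2) - PP (m div 2) (Suc i)))"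
    by (intro lz_mult lz_sq)
  then have "(?c * sq (fk (m div 2))) $ i = (?c * sq (PP (m div 2) (Suc i))) $ i"
    by (simp add: lz_def sq_diff right_diff_distrib)
  also have "\<dots> = PP m (Suc (Suc i)) $ i" by (simp only: PP_rec)
  also have "\<dots> = fk m $ i" by (simp add: fk_nth[of i "Suc (Suc i)"])
  finally show "fk m $ i = (?c * sq (fk (m div 2))) $ i" by simp
qed

lemma fk_0: "(fk m :: 'a::comm_ring_1 fps) $ 0 = 1"
proof -
  have "fk m $ 0 = (PP m (Suc 0) :: 'a fps) $ 0" by (rule fk_nth) simp
  also have "(PP m (Suc 0) :: 'a fps) = PP m 0 * (if bit m 0 then 1 else 1 + fps_X ^ (2 ^ 0))" by (rule PP_step)
  also have "(PP m 0 :: 'a fps) = 1" by (simp add: PP_def)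
  also have "(1 * (if bit m 0 then 1 else 1 + fps_X ^ (2 ^ 0)) :: 'a fps) $ 0 = 1" by simp
  finally show ?thesis .
qed


definition HH :: "nat \<Rightarrow> 'a::comm_ring_1 fps \<Rightarrow> 'a fps \<Rightarrow> 'a fps" where
  "HH k a b = (fps_const (sigma k) * fk k * fps_X ^ k) \<odot> (fdot k * a) \<odot> (fdot k * b)"
definition TT :: "nat \<Rightarrow> 'a::comm_ring_1 fps \<Rightarrow> 'a fps \<Rightarrow> 'a fps" where
  "TT k a b = fk k * HH k a b"
definition SS :: "nat \<Rightarrow> 'a::comm_ring_1 fps \<Rightarrow> 'a fps \<Rightarrow> 'a fps" where
  "SS N a b = (\<Sum>k<N. TT k a b)"

lemma HH_even: fixes a b :: "'a::comm_ring_1 fps" shows "HH (2*k) a b = sq (HH k (ev a) (ev b)) + fps_X * sq (HH k (od a) (od b))"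
proof -
  define G :: "'a fps" where "G = fps_const (sigma k) * fk k * fps_X ^ k"
  define ea where "ea = ev a"
  define oa where "oa = od a"
  define eb where "eb = ev b"
  define ob where "ob = od b"
  have da: "a = sq ea + fps_X * sq oa" unfolding ea_def oa_def by (rule decomp)
  have db: "b = sq eb + fps_X * sq ob" unfolding eb_def ob_def by (rule decomp)
  have s: "sigma (2*k) = sigma k" using sigma_rec[of "2*k"] by simp
  have f: "fk (2*k) = (1 + fps_X) * sq (fk k)" using fk_rec[of "2*k"] by simp
  have d: "fdot (2*k) = sq (fdot k)" using fdot_rec[of "2*k"] by simp
  have g: "fps_const (sigma (2*k)) * fk (2*k) * fps_X ^ (2*k) = sq G + fps_X * sq G"
    unfolding s f G_def by (simp add: sq_mult sq_const sq_Xpow algebra_simps)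
  have fa: "fdot (2*k) * a = sq (fdot k * ea) + fps_X * sq (fdot k * oa)"
    unfolding d by (subst da) (simp add: sq_mult algebra_simps)
  have fb: "fdot (2*k) * b = sq (fdot k * eb) + fps_X * sq (fdot k * ob)"
    unfolding d by (subst db) (simp add: sq_mult algebra_simps)
  show ?thesis
    unfolding HH_def g fa fb had G_def ea_def oa_def eb_def ob_def ..
qed

lemma HH_odd: fixes a b :: "'a::comm_ring_1 fps" shows "HH (Suc (2*k)) a b = - (fps_X * sq (HH k (od a - ev a) (od b - ev b)))"
proof -
  define G :: "'a fps" where "G = fps_const (sigma k) * fk k * fps_X ^ k"
  define ea where "ea = ev a"
  define oa where "oa = od a"
  define eb where "eb = ev b"
  define ob where "ob = od b"
  have da: "a = sq ea + fps_X * sq oa" unfolding ea_def oa_def by (rule decomp)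
  have db: "b = sq eb + fps_X * sq ob" unfolding eb_def ob_def by (rule decomp)
  have s: "sigma (Suc (2*k)) = - sigma k" using sigma_rec[of "Suc (2*k)"] by simp
  have f: "fk (Suc (2*k)) = sq (fk k)" using fk_rec[of "Suc (2*k)"] by simp
  have d: "fdot (Suc (2*k)) = (1 - fps_X) * sq (fdot k)" using fdot_rec[of "Suc (2*k)"] by simp
  have g: "fps_const (sigma (Suc (2*k))) * fk (Suc (2*k)) * fps_X ^ (Suc (2*k)) = sq 0 + fps_X * sq (- G)"
    unfolding s f G_def by (simp del: fps_const_neg add: fps_const_neg[symmetric] sq_mult sq_const sq_Xpow sq_0 sq_uminus algebra_simps)
  have fa: "fdot (Suc (2*k)) * a = sq (fdot k * (ea - fps_X * oa)) + fps_X * sq (fdot k * (oa - ea))"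
    unfolding d by (subst da) (simp add: sq_mult sq_diff sq_X algebra_simps power2_eq_square)
  have fb: "fdot (Suc (2*k)) * b = sq (fdot k * (eb - fps_X * ob)) + fps_X * sq (fdot k * (ob - eb))"
    unfolding d by (subst db) (simp add: sq_mult sq_diff sq_X algebra_simps power2_eq_square)
  show ?thesis
    unfolding HH_def g fa fb unfolding had unfolding had0 sq_0 had_uminus sq_uminus G_def ea_def oa_def eb_def ob_def
    by simp
qed

lemma TT_even: "TT (2*k) a b = (1 + fps_X) * (sq (TT k (ev a) (ev b)) + fps_X * sq (TT k (od a) (od b)))"
proof -
  have f: "fk (2*k) = (1 + fps_X) * sq (fk k)" using fk_rec[of "2*k"] by simp
  show ?thesis unfolding TT_def HH_even f by (simp add: sq_mult algebra_simps)
qed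

lemma TT_odd: "TT (Suc (2*k)) a b = - (fps_X * sq (TT k (od a - ev a) (od b - ev b)))"
proof -
  have f: "fk (Suc (2*k)) = sq (fk k)" using fk_rec[of "Suc (2*k)"] by simp
  show ?thesis unfolding TT_def HH_odd f by (simp add: sq_mult sq_uminus algebra_simps)
qed

lemma SS_even: "SS (2*M) a b = (1 + fps_X) * (sq (SS M (ev a) (ev b)) + fps_X * sq (SS M (od a) (od b)))
   - fps_X * sq (SS M (od a - ev a) (od b - ev b))"
proof (induction M)
  case 0 then show ?case by (simp add: SS_def sq_0)
next
  case (Suc M)
  have e: "2 * Suc M = Suc (Suc (2*M))" by simp
  have "SS (2 * Suc M) a b = SS (2*M) a b + TT (2*M) a b + TT (Suc (2*M)) a b"
    unfolding e SS_def by simp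
  also have "\<dots> = (1 + fps_X) * (sq (SS (Suc M) (ev a) (ev b)) + fps_X * sq (SS (Suc M) (od a) (od b)))
   - fps_X * sq (SS (Suc M) (od a - ev a) (od b - ev b))"
    unfolding Suc.IH TT_even TT_odd by (simp add: SS_def sq_add algebra_simps)
  finally show ?case .
qed

lemma TT_lz: "lz k (TT k a b)"
  unfolding TT_def HH_def by (intro lz_mult lz_had lz_Xpow)

lemma main_lz: "lz (2^L) (SS (2^L) a b - a * b)"
proof (induction L arbitrary: a b)
  case 0
  have "(TT 0 a b) $ 0 = a $ 0 * b $ 0"
    by (simp add: TT_def HH_def termwise_prod_def fk_0 sigma_def fdot_def)
  then show ?case by (simp add: lz_def SS_def)
next
  case (Suc L)
  define ea where "ea = ev a"
  define oa where "oa = od a"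
  define eb where "eb = ev b"
  define ob where "ob = od b"
  have da: "a = sq ea + fps_X * sq oa" unfolding ea_def oa_def by (rule decomp)
  have db: "b = sq eb + fps_X * sq ob" unfolding eb_def ob_def by (rule decomp)
  have ab: "a * b = (1 + fps_X) * (sq (ea * eb) + fps_X * sq (oa * ob)) - fps_X * sq ((oa - ea) * (ob - eb))"
    by (subst da, subst db) (simp add: sq_mult sq_diff sq_add sq_X algebra_simps power2_eq_square)
  have e: "SS (2^Suc L) a b - a * b = (1 + fps_X) * (sq (SS (2^L) ea eb - ea * eb) + fps_X * sq (SS (2^L) oa ob - oa * ob))
     - fps_X * sq (SS (2^L) (oa - ea) (ob - eb) - (oa - ea) * (ob - eb))"
  proof -
    have SSe: "SS (2^Suc L) a b = (1 + fps_X) * (sq (SS (2^L) ea eb) + fps_X * sq (SS (2^L) oa ob))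
       - fps_X * sq (SS (2^L) (oa - ea) (ob - eb))"
      unfolding power_Suc SS_even ea_def oa_def eb_def ob_def ..
    show ?thesis unfolding SSe ab sq_diff by (simp add: algebra_simps)
  qed
  have h1: "lz (2^L) (SS (2^L) ea eb - ea * eb)" by (rule Suc.IH)
  have h2: "lz (2^L) (SS (2^L) oa ob - oa * ob)" by (rule Suc.IH)
  have h3: "lz (2^L) (SS (2^L) (oa - ea) (ob - eb) - (oa - ea) * (ob - eb))" by (rule Suc.IH)
  show ?case unfolding e unfolding power_Suc
    by (rule lz_diff[OF lz_mult[OF lz_add[OF lz_sq[OF h1] lz_mult[OF lz_sq[OF h2]]]] lz_mult[OF lz_sq[OF h3]]])
qed

theorem mainTheorem4:
  fixes a b :: "'a::comm_ring_1 fps"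
  shows "(\<lambda>N. \<Sum>k<N. fk k * ((fps_const (sigma k) * fk k * fps_X ^ k)
            \<odot> (fdot k * a) \<odot> (fdot k * b)))
         \<longlonglongrightarrow> a * b"
proof -
  have "(\<lambda>N. SS N a b) \<longlonglongrightarrow> a * b"
  proof (rule TL)
    fix L
    show "\<exists>N0. \<forall>N\<ge>N0. lz L (SS N a b - a * b)"
    proof (rule exI[of _ "2^L"], intro allI impI)
      fix N :: nat assume N: "2^L \<le> N"
      have split: "SS N a b = SS (2^L) a b + (\<Sum>k\<in>{2^L..<N}. TT k a b)"
        unfolding SS_def using sum.atLeastLessThan_concat[of 0 "2^L" N "\<lambda>k. TT k a b"] N
        by (simp add: lessThan_atLeast0)
      have t: "lz (2^L) (\<Sum>k\<in>{2^L..<N}. TT k a b)"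
        by (rule lz_sum) (auto intro: lz_mono[OF TT_lz])
      have eq: "SS N a b - a * b = (\<Sum>k\<in>{2^L..<N}. TT k a b) + (SS (2^L) a b - a * b)"
        unfolding split by (simp add: algebra_simps)
      have "lz (2^L) (SS N a b - a * b)"
        unfolding eq by (rule lz_add[OF t main_lz])
      moreover have "L \<le> 2^L" using less_exp[of L] by simp
      ultimately show "lz L (SS N a b - a * b)" by (rule lz_mono)
    qed
  qed
  then show ?thesis by (simp add: SS_def TT_def HH_def)
qed

end
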